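(* Under the hypotheses and notation below, the two transformed potentials $$u^{[N]}_0=u+\mathrm{i}\left(\varphi^{(2)\dagger}\mathbf{M}^{-1}\varphi^{(1)}\right)_x$$ and $$u^{[N]}_\infty=\frac{1+2\varphi^{(1)\dagger}\mathbf{\Lambda}^\dagger\mathbf{M}^{-1}\varphi^{(1)}}{1-2\varphi^{(2)\dagger}\mathbf{\Lambda}^\dagger(\mathbf{M}^\dagger)^{-1}\varphi^{(2)}}\,u+\frac{4\varphi^{(2)\dagger}(\mathbf{\Lambda}^{\dagger})^2\mathbf{M}^{-1}\varphi^{(1)}}{1-2\varphi^{(2)\dagger}\mathbf{\Lambda}^\dagger(\mathbf{M}^\dagger)^{-1}\varphi^{(2)}}$$ coincide: $u^{[N]}_0=u^{[N]}_\infty$.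
   Context: Let $u\in L^{\infty}\cap C^{\infty}$ be a solution of the DNLS equation $\mathrm{i}u_t+u_{xx}+2\mathrm{i}(|u|^2u)_x=0$. $^*$ denotes complex conjugation, $^\dagger$ conjugate transpose, $\sigma_3=\mathrm{diag}(1,-1)$, $\mathbf{Q}=\begin{pmatrix}0&\mathrm{i}u\\ \mathrm{i}u^*&0\end{pmatrix}$, $\mathbf{U}(\mathbf{Q};\lambda)=-2\mathrm{i}\sigma_3\lambda^2+2\mathbf{Q}\lambda$, $\mathbf{V}(\mathbf{Q};\lambda)=(4\lambda^2+2\mathbf{Q}^2)\mathbf{U}(\mathbf{Q};\lambda)+2\mathrm{i}\sigma_3\mathbf{Q}_x\lambda$. Let $N\ge1$, $\lambda_1,\dots,\lambda_N\in\mathbb{C}$ with $\lambda_j^*\neq\pm\lambda_i$ for all $i,j$, and let $\varphi_i=(\varphi_i^{(1)},\varphi_i^{(2)})^T$ solve $\varphi_x=\mathbf{U}(\mathbf{Q};\lambda_i)\varphi$, $\varphi_t=\mathbf{V}(\mathbf{Q};\lambda_i)\varphi$. Put $\varphi^{(k)}=(\varphi_1^{(k)},\dots,\varphi_N^{(k)})^T$, $\mathbf{\Lambda}=\mathrm{diag}(\lambda_i)$, and $\mathbf{M}_{ij}=\left(\frac{\varphi_j^{\dagger}\varphi_i}{\lambda_j^{*}-\lambda_i}-\frac{\varphi_j^{\dagger}\sigma_3\varphi_i}{\lambda_j^{*}+\lambda_i}\right)\lambda_i\lambda_j^{*}$. Assume $\mathbf{M}$ is invertible and $1-2\varphi^{(2)\dagger}\mathbf{\Lambda}^\dagger(\mathbf{M}^\dagger)^{-1}\varphi^{(2)}\ne0$.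 *)

theory Defs
  imports "HOL-Analysis.Analysis"
begin

definition px :: "(real \<times> real \<Rightarrow> complex) \<Rightarrow> real \<times> real \<Rightarrow> complex" where
  "px f = (\<lambda>(x, t). vector_derivative (\<lambda>s. f (s, t)) (at x))"

definition pt :: "(real \<times> real \<Rightarrow> complex) \<Rightarrow> real \<times> real \<Rightarrow> complex" where
  "pt f = (\<lambda>(x, t). vector_derivative (\<lambda>s. f (x, s)) (at t))"

fun iter_partial :: "bool list \<Rightarrow> (real \<times> real \<Rightarrow> complex) \<Rightarrow> real \<times> real \<Rightarrow> complex" where
  "iter_partial [] f = f"
| "iter_partial (b # bs) f = (if b then px else pt) (iter_partial bs f)"

definition Cinf :: "(real \<times> real \<Rightarrow> complex) \<Rightarrow> bool" where
  "Cinf f \<longleftrightarrow> (\<forall>bs. iter_partial bs f differentiable_on UNIV)"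

definition cscale :: "complex \<Rightarrow> complex^'m^'n \<Rightarrow> complex^'m^'n" where
  "cscale c A = (\<chi> i j. c * A$i$j)"

definition ctrans :: "complex^'m^'n \<Rightarrow> complex^'n^'m" where
  "ctrans A = (\<chi> i j. cnj (A$j$i))"

definition hdot :: "complex^'n \<Rightarrow> complex^'n \<Rightarrow> complex" where
  "hdot a b = (\<Sum>i\<in>UNIV. cnj (a$i) * b$i)"

definition diagm :: "('n \<Rightarrow> complex) \<Rightarrow> complex^'n^'n" where
  "diagm d = (\<chi> i j. if i = j then d i else 0)"

definition sigma3 :: "complex^2^2" where
  "sigma3 = vector [vector [1, 0], vector [0, -1]]"

definition Qmat :: "complex \<Rightarrow> complex^2^2" where
  "Qmat w = vector [vector [0, \<i> * w], vector [\<i> * cnj w, 0]]"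

definition Umat :: "complex^2^2 \<Rightarrow> complex \<Rightarrow> complex^2^2" where
  "Umat Q l = cscale (-2 * \<i> * l^2) sigma3 + cscale (2 * l) Q"

definition Vmat :: "complex^2^2 \<Rightarrow> complex^2^2 \<Rightarrow> complex \<Rightarrow> complex^2^2" where
  "Vmat Q Qx l = (cscale (4 * l^2) (mat 1) + cscale 2 (Q ** Q)) ** Umat Q l
                 + cscale (2 * \<i> * l) (sigma3 ** Qx)"

definition Mmat :: "('n \<Rightarrow> complex) \<Rightarrow> ('n \<Rightarrow> complex^2) \<Rightarrow> complex^'n^'n" where
  "Mmat lam ph = (\<chi> i j.
     (hdot (ph j) (ph i) / (cnj (lam j) - lam i)
      - hdot (ph j) (sigma3 *v ph i) / (cnj (lam j) + lam i)) * lam i * cnj (lam j))"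

definition comp_vec :: "('n \<Rightarrow> complex^2) \<Rightarrow> 2 \<Rightarrow> complex^'n" where
  "comp_vec ph k = (\<chi> i. ph i $ k)"

end

theory Submission
  imports Defs
begin


lemma alg:
  fixes lam A B Y Y' W :: "'n::finite \<Rightarrow> complex" and M :: "'n \<Rightarrow> 'n \<Rightarrow> complex" and U0 :: complex
  assumes F1: "\<And>i. (\<Sum>j\<in>UNIV. M i j * Y j) = A i"
    and F2: "\<And>j. (\<Sum>i\<in>UNIV. cnj (M i j) * W i) = B j"
    and F3: "\<And>i. (\<Sum>j\<in>UNIV. M i j * Y' j) + (\<Sum>j\<in>UNIV. (4 * \<i> * lam i * cnj (lam j) *
               (lam i * cnj (A j) * A i - cnj (lam j) * cnj (B j) * B i - U0 * cnj (A j) * B i)) * Y j)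
             = -2 * \<i> * lam i ^ 2 * A i + 2 * \<i> * lam i * U0 * B i"
    and E1: "\<And>i j. M i j * (cnj (lam j) ^ 2 - lam i ^ 2)
             = lam i * cnj (lam j) * (2 * cnj (lam j) * cnj (B j) * B i + 2 * lam i * cnj (A j) * A i)"
    and E2: "\<And>i j. lam i * cnj (M j i) + M i j * cnj (lam j) = 2 * lam i * cnj (lam j) * B i * cnj (B j)"
    and den: "1 - 2 * (\<Sum>i\<in>UNIV. cnj (B i) * cnj (lam i) * W i) \<noteq> 0"
  shows "U0 + \<i> * (\<Sum>i\<in>UNIV. cnj (2 * \<i> * lam i * cnj U0 * A i + 2 * \<i> * lam i ^ 2 * B i) * Y i
                      + cnj (B i) * Y' i)
       = ((1 + 2 * (\<Sum>i\<in>UNIV. cnj (A i) * cnj (lam i) * Y i)) * U0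
          + 4 * (\<Sum>i\<in>UNIV. cnj (B i) * cnj (lam i) ^ 2 * Y i))
         / (1 - 2 * (\<Sum>i\<in>UNIV. cnj (B i) * cnj (lam i) * W i))"
proof -
  define a where "a = (\<Sum>i\<in>UNIV. cnj (A i) * cnj (lam i) * Y i)"
  define b where "b = (\<Sum>i\<in>UNIV. cnj (B i) * cnj (lam i) ^ 2 * Y i)"
  define c where "c = (\<Sum>i\<in>UNIV. cnj (W i) * lam i ^ 2 * A i)"
  define d where "d = (\<Sum>i\<in>UNIV. cnj (W i) * lam i * B i)"
  define e where "e = (\<Sum>i\<in>UNIV. cnj (B i) * cnj (lam i) * W i)"
  define R where "R i = -2 * \<i> * lam i ^ 2 * A i + 2 * \<i> * lam i * U0 * B i" for i
  define Mx where "Mx i j = 4 * \<i> * lam i * cnj (lam j) *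
               (lam i * cnj (A j) * A i - cnj (lam j) * cnj (B j) * B i - U0 * cnj (A j) * B i)" for i j
  have cB: "cnj (B j) = (\<Sum>i\<in>UNIV. cnj (W i) * M i j)" for j
    using arg_cong[OF F2[of j], of cnj] by (simp add: mult.commute)
  have K1: "(\<Sum>i\<in>UNIV. cnj (B i) * Y' i) = (\<Sum>j\<in>UNIV. cnj (W j) * (R j - (\<Sum>i\<in>UNIV. Mx j i * Y i)))"
  proof -
    have "(\<Sum>i\<in>UNIV. cnj (B i) * Y' i) = (\<Sum>i\<in>UNIV. \<Sum>j\<in>UNIV. cnj (W j) * (M j i * Y' i))"
      by (simp add: cB sum_distrib_right mult.assoc)
    also have "\<dots> = (\<Sum>j\<in>UNIV. cnj (W j) * (\<Sum>i\<in>UNIV. M j i * Y' i))"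
      by (subst sum.swap) (simp add: sum_distrib_left)
    also have "\<dots> = (\<Sum>j\<in>UNIV. cnj (W j) * (R j - (\<Sum>i\<in>UNIV. Mx j i * Y i)))"
    proof -
      have "(\<Sum>i\<in>UNIV. M j i * Y' i) = R j - (\<Sum>i\<in>UNIV. Mx j i * Y i)" for j
        using F3[of j] unfolding R_def Mx_def by (simp only: eq_diff_eq)
      then show ?thesis by simp
    qed
    finally show ?thesis .
  qed
  have K2: "(\<Sum>j\<in>UNIV. cnj (W j) * (\<Sum>i\<in>UNIV. Mx j i * Y i)) = 4 * \<i> * (c * a - d * b - U0 * d * a)"
  proof -
    have ca: "c * a = (\<Sum>j\<in>UNIV. \<Sum>i\<in>UNIV. cnj (W j) * lam j ^ 2 * A j * (cnj (A i) * cnj (lam i) * Y i))"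
      unfolding a_def c_def sum_product ..
    have db: "d * b = (\<Sum>j\<in>UNIV. \<Sum>i\<in>UNIV. cnj (W j) * lam j * B j * (cnj (B i) * cnj (lam i) ^ 2 * Y i))"
      unfolding b_def d_def sum_product ..
    have da: "U0 * d * a = (\<Sum>j\<in>UNIV. \<Sum>i\<in>UNIV. U0 * (cnj (W j) * lam j * B j) * (cnj (A i) * cnj (lam i) * Y i))"
      unfolding a_def d_def sum_distrib_left[of U0] sum_product ..
    have "4 * \<i> * (c * a - d * b - U0 * d * a) = 4 * \<i> *
      (\<Sum>j\<in>UNIV. \<Sum>i\<in>UNIV. (cnj (W j) * lam j ^ 2 * A j * (cnj (A i) * cnj (lam i) * Y i)
         - cnj (W j) * lam j * B j * (cnj (B i) * cnj (lam i) ^ 2 * Y i)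
         - U0 * (cnj (W j) * lam j * B j) * (cnj (A i) * cnj (lam i) * Y i)))"
      unfolding ca db da by (simp only: sum_subtractf)
    also have "\<dots> = (\<Sum>j\<in>UNIV. \<Sum>i\<in>UNIV. 4 * \<i> * (cnj (W j) * lam j ^ 2 * A j * (cnj (A i) * cnj (lam i) * Y i)
         - cnj (W j) * lam j * B j * (cnj (B i) * cnj (lam i) ^ 2 * Y i)
         - U0 * (cnj (W j) * lam j * B j) * (cnj (A i) * cnj (lam i) * Y i)))"
      by (simp only: sum_distrib_left)
    also have "\<dots> = (\<Sum>j\<in>UNIV. cnj (W j) * (\<Sum>i\<in>UNIV. Mx j i * Y i))"
      unfolding sum_distrib_left
      by (rule sum.cong[OF refl], rule sum.cong[OF refl]) (simp add: Mx_def algebra_simps power2_eq_square)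
    finally show ?thesis by simp
  qed
  have K3: "(\<Sum>j\<in>UNIV. cnj (W j) * R j) = -2 * \<i> * c + 2 * \<i> * U0 * d"
    unfolding R_def c_def d_def
    by (simp add: sum_distrib_left algebra_simps sum.distrib sum_subtractf sum_negf)
  have K4: "(\<Sum>i\<in>UNIV. cnj (2 * \<i> * lam i * cnj U0 * A i + 2 * \<i> * lam i ^ 2 * B i) * Y i)
      = -2 * \<i> * U0 * a - 2 * \<i> * b"
    unfolding a_def b_def
    by (simp add: sum_distrib_left algebra_simps sum.distrib sum_subtractf sum_negf)
  have K5: "b - c = 2 * d * b + 2 * c * a"
  proof -
    have "(\<Sum>i\<in>UNIV. \<Sum>j\<in>UNIV. cnj (W i) * (M i j * (cnj (lam j) ^ 2 - lam i ^ 2)) * Y j)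
        = (\<Sum>j\<in>UNIV. (\<Sum>i\<in>UNIV. cnj (W i) * M i j) * cnj (lam j) ^ 2 * Y j)
          - (\<Sum>i\<in>UNIV. cnj (W i) * lam i ^ 2 * (\<Sum>j\<in>UNIV. M i j * Y j))"
      apply (simp add: sum_distrib_left sum_distrib_right sum_subtractf right_diff_distrib left_diff_distrib)
      apply (subst sum.swap[of _ UNIV UNIV])
      apply (simp add: algebra_simps)
      done
    also have "\<dots> = b - c"
      unfolding b_def c_def F1 cB[symmetric] by simp
    finally have L: "(\<Sum>i\<in>UNIV. \<Sum>j\<in>UNIV. cnj (W i) * (M i j * (cnj (lam j) ^ 2 - lam i ^ 2)) * Y j) = b - c" .
    have "(\<Sum>i\<in>UNIV. \<Sum>j\<in>UNIV. cnj (W i) * (M i j * (cnj (lam j) ^ 2 - lam i ^ 2)) * Y j)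
        = (\<Sum>i\<in>UNIV. \<Sum>j\<in>UNIV. 2 * ((cnj (W i) * lam i * B i) * (cnj (B j) * cnj (lam j) ^ 2 * Y j))
             + 2 * ((cnj (W i) * lam i ^ 2 * A i) * (cnj (A j) * cnj (lam j) * Y j)))"
      unfolding E1
      by (rule sum.cong[OF refl], rule sum.cong[OF refl]) (simp add: algebra_simps power2_eq_square)
    also have "\<dots> = 2 * (d * b) + 2 * (c * a)"
    proof -
      have db: "d * b = (\<Sum>i\<in>UNIV. \<Sum>j\<in>UNIV. (cnj (W i) * lam i * B i) * (cnj (B j) * cnj (lam j) ^ 2 * Y j))"
        unfolding d_def b_def sum_product ..
      have ca: "c * a = (\<Sum>i\<in>UNIV. \<Sum>j\<in>UNIV. (cnj (W i) * lam i ^ 2 * A i) * (cnj (A j) * cnj (lam j) * Y j))"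
        unfolding a_def c_def sum_product ..
      show ?thesis unfolding db ca by (simp only: sum.distrib sum_distrib_left)
    qed
    finally show ?thesis using L by simp
  qed
  have K6: "d + e = 2 * d * e"
  proof -
    have "(\<Sum>i\<in>UNIV. \<Sum>j\<in>UNIV. cnj (W i) * (lam i * cnj (M j i) + M i j * cnj (lam j)) * W j)
        = (\<Sum>i\<in>UNIV. cnj (W i) * lam i * (\<Sum>j\<in>UNIV. cnj (M j i) * W j))
          + (\<Sum>j\<in>UNIV. (\<Sum>i\<in>UNIV. cnj (W i) * M i j) * cnj (lam j) * W j)"
    proof -
      have P1: "(\<Sum>i\<in>UNIV. \<Sum>j\<in>UNIV. cnj (W i) * (lam i * cnj (M j i)) * W j)
         = (\<Sum>i\<in>UNIV. cnj (W i) * lam i * (\<Sum>j\<in>UNIV. cnj (M j i) * W j))"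
        by (simp add: sum_distrib_left mult.assoc)
      have P2: "(\<Sum>i\<in>UNIV. \<Sum>j\<in>UNIV. cnj (W i) * (M i j * cnj (lam j)) * W j)
         = (\<Sum>j\<in>UNIV. (\<Sum>i\<in>UNIV. cnj (W i) * M i j) * cnj (lam j) * W j)"
        apply (subst sum.swap)
        apply (simp add: sum_distrib_right mult.assoc mult.left_commute)
        done
      show ?thesis unfolding P1[symmetric] P2[symmetric]
        by (simp only: distrib_left distrib_right sum.distrib)
    qed
    also have "\<dots> = d + e"
      unfolding d_def e_def F2 cB[symmetric] by (simp add: mult.assoc)
    finally have L: "(\<Sum>i\<in>UNIV. \<Sum>j\<in>UNIV. cnj (W i) * (lam i * cnj (M j i) + M i j * cnj (lam j)) * W j) = d + e" .
    have "(\<Sum>i\<in>UNIV. \<Sum>j\<in>UNIV. cnj (W i) * (lam i * cnj (M j i) + M i j * cnj (lam j)) * W j)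
        = (\<Sum>i\<in>UNIV. \<Sum>j\<in>UNIV. 2 * ((cnj (W i) * lam i * B i) * (cnj (B j) * cnj (lam j) * W j)))"
      unfolding E2
      by (rule sum.cong[OF refl], rule sum.cong[OF refl]) (simp add: algebra_simps)
    also have "\<dots> = 2 * (d * e)"
    proof -
      have de: "d * e = (\<Sum>i\<in>UNIV. \<Sum>j\<in>UNIV. (cnj (W i) * lam i * B i) * (cnj (B j) * cnj (lam j) * W j))"
        unfolding d_def e_def sum_product ..
      show ?thesis unfolding de by (simp only: sum_distrib_left)
    qed
    finally show ?thesis using L by simp
  qed
  have LHS: "U0 + \<i> * (\<Sum>i\<in>UNIV. cnj (2 * \<i> * lam i * cnj U0 * A i + 2 * \<i> * lam i ^ 2 * B i) * Y i
                      + cnj (B i) * Y' i)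
      = U0 + \<i> * ((-2 * \<i> * U0 * a - 2 * \<i> * b) + (-2 * \<i> * c + 2 * \<i> * U0 * d)
                     - 4 * \<i> * (c * a - d * b - U0 * d * a))"
    unfolding sum.distrib K4 K1 right_diff_distrib[of "cnj _"] sum_subtractf K2 K3 by (simp add: algebra_simps)
  also have "\<dots> = (1 - 2 * d) * ((1 + 2 * a) * U0 + 4 * b) - 2 * (b - c - 2 * d * b - 2 * c * a)"
    by (simp add: algebra_simps)
  also have "\<dots> = (1 - 2 * d) * ((1 + 2 * a) * U0 + 4 * b)"
    using K5 by simp
  finally have L: "U0 + \<i> * (\<Sum>i\<in>UNIV. cnj (2 * \<i> * lam i * cnj U0 * A i + 2 * \<i> * lam i ^ 2 * B i) * Y i
                      + cnj (B i) * Y' i) = (1 - 2 * d) * ((1 + 2 * a) * U0 + 4 * b)" .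
  have de: "(1 - 2 * d) * (1 - 2 * e) = 1"
  proof -
    have "(1 - 2 * d) * (1 - 2 * e) = 1 - 2 * (d + e) + 4 * d * e" by (simp add: algebra_simps)
    then show ?thesis using K6 by simp
  qed
  have den': "1 - 2 * e \<noteq> 0" using den unfolding e_def .
  show ?thesis
    unfolding L a_def[symmetric] b_def[symmetric] e_def[symmetric]
    using den' de by (simp add: eq_divide_eq)
qed



lemma minv:
  fixes A :: "'a::semiring_1^'n^'n"
  assumes "invertible A"
  shows "A ** matrix_inv A = mat 1 \<and> matrix_inv A ** A = mat 1"
  using assms unfolding invertible_def matrix_inv_def by (rule someI_ex)

lemma minv_vec:
  fixes A :: "'a::comm_semiring_1^'n^'n"
  assumes "invertible A"
  shows "A *v (matrix_inv A *v b) = b"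
  using minv[OF assms] by (simp add: matrix_vector_mul_assoc)

lemma differentiable_prod_at:
  fixes f :: "'i \<Rightarrow> real \<Rightarrow> complex"
  assumes "\<And>i. i \<in> I \<Longrightarrow> f i differentiable (at x)"
  shows "(\<lambda>s. \<Prod>i\<in>I. f i s) differentiable (at x)"
proof -
  from assms obtain f' where "\<And>i. i \<in> I \<Longrightarrow> (f i has_derivative f' i) (at x)"
    unfolding differentiable_def by metis
  from has_derivative_prod[of I f f', OF this] show ?thesis
    unfolding differentiable_def by blast
qed

lemma det_differentiable:
  fixes A :: "real \<Rightarrow> complex^'n::finite^'n"
  assumes "\<And>i j. (\<lambda>s. A s $ i $ j) differentiable (at x)"
  shows "(\<lambda>s. det (A s)) differentiable (at x)"
  unfolding det_def
  by (intro differentiable_sum ballI differentiable_mult differentiable_const differentiable_prod_at assms finite_Collect_subsets) auto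

lemma Umat_v1: "(Umat (Qmat w) l *v v) $ 1 = -2 * \<i> * l^2 * v$1 + 2 * \<i> * l * w * v$2"
  by (simp add: Umat_def Qmat_def sigma3_def cscale_def matrix_vector_mult_def sum_2 algebra_simps)

lemma Umat_v2: "(Umat (Qmat w) l *v v) $ 2 = 2 * \<i> * l * cnj w * v$1 + 2 * \<i> * l^2 * v$2"
  by (simp add: Umat_def Qmat_def sigma3_def cscale_def matrix_vector_mult_def sum_2 algebra_simps)

lemma hdot2: "hdot (v::complex^2) w = cnj (v$1) * w$1 + cnj (v$2) * w$2"
  by (simp add: hdot_def sum_2)

lemma sigma3_v: "(sigma3 *v v) $ 1 = v $ 1" "(sigma3 *v v) $ 2 = - v $ 2"
  by (simp_all add: sigma3_def matrix_vector_mult_def sum_2)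

lemma LH_v: "ctrans (diagm lam) *v v = (\<chi> i. cnj (lam i) * v $ i)"
proof -
  have "(\<Sum>j\<in>UNIV. cnj (diagm lam $ j $ i) * v $ j) = (\<Sum>j\<in>UNIV. if j = i then cnj (lam i) * v $ j else 0)" for i
    by (rule sum.cong) (auto simp: diagm_def)
  then show ?thesis by (simp add: vec_eq_iff matrix_vector_mult_def ctrans_def)
qed

lemma LHLH_v: "(ctrans (diagm lam) ** ctrans (diagm lam)) *v v = (\<chi> i. cnj (lam i) ^ 2 * v $ i)"
  by (simp add: matrix_vector_mul_assoc[symmetric] LH_v power2_eq_square mult.assoc)

lemma ctrans_mult: "ctrans ((A::complex^'n^'m) ** B) = ctrans B ** ctrans A"
  by (simp add: vec_eq_iff ctrans_def matrix_matrix_mult_def mult.commute)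

lemma ctrans_mat1: "ctrans (mat 1 :: complex^'n^'n) = mat 1"
  by (simp add: vec_eq_iff ctrans_def mat_def)

lemma invertible_ctrans:
  fixes A :: "complex^'n^'n"
  assumes "invertible A" shows "invertible (ctrans A)"
  unfolding invertible_def
  using minv[OF assms]
  by (metis ctrans_mult ctrans_mat1)

lemma ctrans_v: "(ctrans A *v v) $ j = (\<Sum>i\<in>UNIV. cnj (A $ i $ j) * v $ i)"
  by (simp add: matrix_vector_mult_def ctrans_def)

theorem mainTheorem2:
  fixes u :: "real \<times> real \<Rightarrow> complex"
    and lam :: "'n::finite \<Rightarrow> complex"
    and phi :: "'n \<Rightarrow> real \<times> real \<Rightarrow> complex^2"
    and x t :: real
  assumes u_bdd: "bounded (range u)"
    and u_smooth: "Cinf u"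
    and dnls: "\<And>x t. \<i> * pt u (x, t) + px (px u) (x, t)
                 + 2 * \<i> * px (\<lambda>p. complex_of_real ((cmod (u p))\<^sup>2) * u p) (x, t) = 0"
    and lam_cond: "\<And>i j. cnj (lam j) \<noteq> lam i \<and> cnj (lam j) \<noteq> - lam i"
    and lax_x: "\<And>i x t. ((\<lambda>s. phi i (s, t)) has_vector_derivative
                   (Umat (Qmat (u (x, t))) (lam i) *v phi i (x, t))) (at x)"
    and lax_t: "\<And>i x t. ((\<lambda>s. phi i (x, s)) has_vector_derivative
                   (Vmat (Qmat (u (x, t))) (Qmat (px u (x, t))) (lam i) *v phi i (x, t))) (at t)"
    and M_inv: "\<And>x t. invertible (Mmat lam (\<lambda>i. phi i (x, t)))"
    and den_nz: "\<And>x t. 1 - 2 * hdot (comp_vec (\<lambda>i. phi i (x, t)) 2)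
                    (ctrans (diagm lam) *v (matrix_inv (ctrans (Mmat lam (\<lambda>i. phi i (x, t))))
                       *v comp_vec (\<lambda>i. phi i (x, t)) 2)) \<noteq> 0"
  shows
    "(let M = Mmat lam (\<lambda>i. phi i (x, t));
          p1 = comp_vec (\<lambda>i. phi i (x, t)) 1;
          p2 = comp_vec (\<lambda>i. phi i (x, t)) 2;
          LH = ctrans (diagm lam);
          den = 1 - 2 * hdot p2 (LH *v (matrix_inv (ctrans M) *v p2));
          u0 = u (x, t) + \<i> * vector_derivative
                 (\<lambda>s. hdot (comp_vec (\<lambda>i. phi i (s, t)) 2)
                        (matrix_inv (Mmat lam (\<lambda>i. phi i (s, t))) *v comp_vec (\<lambda>i. phi i (s, t)) 1))
                 (at x);
          uinf = (1 + 2 * hdot p1 (LH *v (matrix_inv M *v p1))) / den * u (x, t)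
                 + 4 * hdot p2 ((LH ** LH) *v (matrix_inv M *v p1)) / den
      in u0 = uinf)"
proof -
  define Mf where "Mf s = Mmat lam (\<lambda>i. phi i (s, t))" for s
  define p1 where "p1 s = comp_vec (\<lambda>i. phi i (s, t)) 1" for s
  define y where "y s = matrix_inv (Mf s) *v p1 s" for s
  define U0 where "U0 = u (x, t)"
  define A where "A i = phi i (x, t) $ 1" for i
  define B where "B i = phi i (x, t) $ 2" for i
  define Mx where "Mx i j = 4 * \<i> * lam i * cnj (lam j) *
               (lam i * cnj (A j) * A i - cnj (lam j) * cnj (B j) * B i - U0 * cnj (A j) * B i)" for i j
  have dA: "((\<lambda>s. phi i (s, t) $ 1) has_vector_derivative
             (-2 * \<i> * lam i ^ 2 * A i + 2 * \<i> * lam i * U0 * B i)) (at x)" for i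
    using bounded_linear.has_vector_derivative[OF bounded_linear_vec_nth lax_x[where i=i and x=x and t=t], of 1]
    by (simp add: Umat_v1 A_def B_def U0_def)
  have dB: "((\<lambda>s. phi i (s, t) $ 2) has_vector_derivative
             (2 * \<i> * lam i * cnj U0 * A i + 2 * \<i> * lam i ^ 2 * B i)) (at x)" for i
    using bounded_linear.has_vector_derivative[OF bounded_linear_vec_nth lax_x[where i=i and x=x and t=t], of 2]
    by (simp add: Umat_v2 A_def B_def U0_def)
  have nz1: "cnj (lam j) - lam i \<noteq> 0" for i j using lam_cond[where i=i and j=j] by simp
  have nz2: "cnj (lam j) + lam i \<noteq> 0" for i j using lam_cond[where i=i and j=j] by (metis add_eq_0_iff minus_equation_iff)
  have nz3: "cnj (lam j) * cnj (lam j) - lam i * lam i \<noteq> 0" for i j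
  proof -
    have "cnj (lam j) * cnj (lam j) - lam i * lam i = (cnj (lam j) - lam i) * (cnj (lam j) + lam i)"
      by (simp add: algebra_simps)
    then show ?thesis using nz1[of j i] nz2[of j i] by simp
  qed
  have Mf_eq: "Mf s $ i $ j = ((cnj (phi j (s, t) $ 1) * phi i (s, t) $ 1 + cnj (phi j (s, t) $ 2) * phi i (s, t) $ 2)
        / (cnj (lam j) - lam i)
      - (cnj (phi j (s, t) $ 1) * phi i (s, t) $ 1 - cnj (phi j (s, t) $ 2) * phi i (s, t) $ 2)
        / (cnj (lam j) + lam i)) * lam i * cnj (lam j)" for s i j
    by (simp add: Mf_def Mmat_def hdot2 sigma3_v)
  have dM: "((\<lambda>s. Mf s $ i $ j) has_vector_derivative Mx i j) (at x)" for i j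
    unfolding Mf_eq
    apply (rule has_vector_derivative_eq_rhs)
     apply (rule dA dB has_vector_derivative_mult has_vector_derivative_divide has_vector_derivative_add has_vector_derivative_diff has_vector_derivative_cnj has_vector_derivative_const)+
    using nz1[of j i] nz2[of j i] nz3[where i=i and j=j]
    apply (simp add: Mx_def A_def B_def field_simps)
    apply (simp add: algebra_simps power2_eq_square)
    done
  have invM: "invertible (Mf s)" for s unfolding Mf_def by (rule M_inv)
  have detM: "det (Mf s) \<noteq> 0" for s using invM[of s] by (simp add: invertible_det_nz)
  have My: "Mf s *v y s = p1 s" for s unfolding y_def by (rule minv_vec[OF invM])
  have ycr: "y s $ k = det (\<chi> i j. if j = k then p1 s $ i else Mf s $ i $ j) / det (Mf s)" for s k
    using My[of s] unfolding cramer[OF detM] by (simp add: vec_eq_iff)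
  have p1x: "p1 s $ i = phi i (s, t) $ 1" for s i by (simp add: p1_def comp_vec_def)
  have diffM: "(\<lambda>s. Mf s $ i $ j) differentiable (at x)" for i j
    using dM[of i j] unfolding differentiable_def has_vector_derivative_def by blast
  have diffA: "(\<lambda>s. p1 s $ i) differentiable (at x)" for i
    using dA[of i] unfolding p1x differentiable_def has_vector_derivative_def by blast
  have diffy: "(\<lambda>s. y s $ k) differentiable (at x)" for k
    unfolding ycr
    apply (intro differentiable_divide det_differentiable detM)
    subgoal for i j by (cases "j = k") (simp_all add: diffM diffA)
    subgoal for i j by (simp add: diffM)
    done
  define Y' where "Y' k = vector_derivative (\<lambda>s. y s $ k) (at x)" for k
  have dY: "((\<lambda>s. y s $ k) has_vector_derivative Y' k) (at x)" for k
    unfolding Y'_def using diffy[of k] vector_derivative_works by blast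
  define Y where "Y k = y x $ k" for k
  have F1: "(\<Sum>j\<in>UNIV. Mf x $ i $ j * Y j) = A i" for i
    using arg_cong[OF My[of x], of "\<lambda>v. v $ i"] by (simp add: matrix_vector_mult_def Y_def A_def p1x)
  have F3: "(\<Sum>j\<in>UNIV. Mf x $ i $ j * Y' j) + (\<Sum>j\<in>UNIV. Mx i j * Y j)
        = -2 * \<i> * lam i ^ 2 * A i + 2 * \<i> * lam i * U0 * B i" for i
  proof -
    have fe: "(\<lambda>s. \<Sum>j\<in>UNIV. Mf s $ i $ j * y s $ j) = (\<lambda>s. phi i (s, t) $ 1)"
      using My by (auto simp: fun_eq_iff matrix_vector_mult_def vec_eq_iff p1x)
    have "((\<lambda>s. \<Sum>j\<in>UNIV. Mf s $ i $ j * y s $ j) has_vector_derivative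
           (\<Sum>j\<in>UNIV. Mf x $ i $ j * Y' j + Mx i j * Y j)) (at x)"
      by (rule has_vector_derivative_sum, rule has_vector_derivative_eq_rhs[OF has_vector_derivative_mult[OF dM dY]])
        (simp add: Y_def)
    then have "((\<lambda>s. phi i (s, t) $ 1) has_vector_derivative
           (\<Sum>j\<in>UNIV. Mf x $ i $ j * Y' j + Mx i j * Y j)) (at x)" unfolding fe .
    from vector_derivative_unique_at[OF this dA[of i]] show ?thesis
      by (simp add: sum.distrib)
  qed
  define p2x where "p2x = comp_vec (\<lambda>i. phi i (x, t)) 2"
  define W where "W i = (matrix_inv (ctrans (Mf x)) *v p2x) $ i" for i
  have F2: "(\<Sum>i\<in>UNIV. cnj (Mf x $ i $ j) * W i) = B j" for j
    using arg_cong[OF minv_vec[OF invertible_ctrans[OF invM[of x]], of p2x], of "\<lambda>v. v $ j"]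
    unfolding ctrans_v by (simp add: W_def p2x_def comp_vec_def B_def)
  have E1: "Mf x $ i $ j * (cnj (lam j) ^ 2 - lam i ^ 2)
             = lam i * cnj (lam j) * (2 * cnj (lam j) * cnj (B j) * B i + 2 * lam i * cnj (A j) * A i)" for i j
    using nz1[of j i] nz2[of j i] nz3[where i=i and j=j] unfolding Mf_eq A_def B_def
    by (simp add: field_simps power2_eq_square; simp add: algebra_simps)
  have E2: "lam i * cnj (Mf x $ j $ i) + Mf x $ i $ j * cnj (lam j) = 2 * lam i * cnj (lam j) * B i * cnj (B j)" for i j
  proof -
    define p where "p = lam i"
    define q where "q = cnj (lam j)"
    define S where "S = cnj (A j) * A i + cnj (B j) * B i"
    define T where "T = cnj (A j) * A i - cnj (B j) * B i"
    have qp1: "q - p \<noteq> 0" using nz1[of j i] unfolding p_def q_def by simp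
    have qp2: "q + p \<noteq> 0" using nz2[of j i] unfolding p_def q_def by simp
    have m1: "Mf x $ i $ j = (S / (q - p) - T / (q + p)) * p * q"
      unfolding Mf_eq S_def T_def p_def q_def A_def B_def ..
    have m2: "cnj (Mf x $ j $ i) = (S / (p - q) - T / (p + q)) * p * q"
      unfolding Mf_eq S_def T_def p_def q_def A_def B_def
      by (simp add: algebra_simps)
    have "p * ((S / (p - q) - T / (p + q)) * p * q) + ((S / (q - p) - T / (q + p)) * p * q) * q = p * q * (S - T)"
    proof -
      define X where "X = S / (q - p)"
      define Z where "Z = T / (q + p)"
      have SX: "S = X * (q - p)" unfolding X_def using qp1 by simp
      have TZ: "T = Z * (q + p)" unfolding Z_def using qp2 by simp
      have a: "S / (p - q) = - X" unfolding X_def by (metis minus_diff_eq minus_divide_right)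
      have b: "T / (p + q) = Z" unfolding Z_def by (simp add: add.commute)
      show ?thesis unfolding a b X_def[symmetric] Z_def[symmetric]
        by (simp only: SX TZ) (simp add: algebra_simps)
    qed
    then show ?thesis unfolding m1 m2 p_def q_def S_def T_def by (simp add: algebra_simps)
  qed
  have den: "1 - 2 * (\<Sum>i\<in>UNIV. cnj (B i) * cnj (lam i) * W i) \<noteq> 0"
    using den_nz[where x=x and t=t]
    by (simp add: hdot_def LH_v W_def p2x_def Mf_def comp_vec_def B_def mult.assoc)
  have main: "U0 + \<i> * (\<Sum>i\<in>UNIV. cnj (2 * \<i> * lam i * cnj U0 * A i + 2 * \<i> * lam i ^ 2 * B i) * Y i
                      + cnj (B i) * Y' i)
       = ((1 + 2 * (\<Sum>i\<in>UNIV. cnj (A i) * cnj (lam i) * Y i)) * U0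
          + 4 * (\<Sum>i\<in>UNIV. cnj (B i) * cnj (lam i) ^ 2 * Y i))
         / (1 - 2 * (\<Sum>i\<in>UNIV. cnj (B i) * cnj (lam i) * W i))"
    by (rule alg[of "\<lambda>i j. Mf x $ i $ j", OF F1 F2 F3[unfolded Mx_def] E1 E2 den])
  have hd: "(\<lambda>s. hdot (comp_vec (\<lambda>i. phi i (s, t)) 2)
                  (matrix_inv (Mmat lam (\<lambda>i. phi i (s, t))) *v comp_vec (\<lambda>i. phi i (s, t)) 1))
          = (\<lambda>s. \<Sum>i\<in>UNIV. cnj (phi i (s, t) $ 2) * y s $ i)"
    by (simp add: hdot_def comp_vec_def y_def Mf_def p1_def)
  have dH: "((\<lambda>s. \<Sum>i\<in>UNIV. cnj (phi i (s, t) $ 2) * y s $ i) has_vector_derivative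
      (\<Sum>i\<in>UNIV. cnj (2 * \<i> * lam i * cnj U0 * A i + 2 * \<i> * lam i ^ 2 * B i) * Y i + cnj (B i) * Y' i)) (at x)"
    by (rule has_vector_derivative_sum, rule has_vector_derivative_eq_rhs[OF has_vector_derivative_mult[OF has_vector_derivative_cnj[OF dB] dY]])
      (simp add: B_def Y_def add.commute)
  have vd: "vector_derivative (\<lambda>s. hdot (comp_vec (\<lambda>i. phi i (s, t)) 2)
                  (matrix_inv (Mmat lam (\<lambda>i. phi i (s, t))) *v comp_vec (\<lambda>i. phi i (s, t)) 1)) (at x)
      = (\<Sum>i\<in>UNIV. cnj (2 * \<i> * lam i * cnj U0 * A i + 2 * \<i> * lam i ^ 2 * B i) * Y i + cnj (B i) * Y' i)"
    unfolding hd using dH by (rule vector_derivative_at)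
  have hA: "hdot (comp_vec (\<lambda>i. phi i (x, t)) 1) (ctrans (diagm lam) *v (matrix_inv (Mmat lam (\<lambda>i. phi i (x, t))) *v comp_vec (\<lambda>i. phi i (x, t)) 1))
     = (\<Sum>i\<in>UNIV. cnj (A i) * cnj (lam i) * Y i)"
    by (simp add: hdot_def LH_v comp_vec_def A_def Y_def y_def Mf_def p1_def mult.assoc)
  have hB: "hdot (comp_vec (\<lambda>i. phi i (x, t)) 2) ((ctrans (diagm lam) ** ctrans (diagm lam)) *v (matrix_inv (Mmat lam (\<lambda>i. phi i (x, t))) *v comp_vec (\<lambda>i. phi i (x, t)) 1))
     = (\<Sum>i\<in>UNIV. cnj (B i) * cnj (lam i) ^ 2 * Y i)"
    by (simp add: hdot_def LHLH_v comp_vec_def B_def Y_def y_def Mf_def p1_def mult.assoc)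
  have hE: "hdot (comp_vec (\<lambda>i. phi i (x, t)) 2) (ctrans (diagm lam) *v (matrix_inv (ctrans (Mmat lam (\<lambda>i. phi i (x, t)))) *v comp_vec (\<lambda>i. phi i (x, t)) 2))
     = (\<Sum>i\<in>UNIV. cnj (B i) * cnj (lam i) * W i)"
    by (simp add: hdot_def LH_v W_def p2x_def Mf_def comp_vec_def B_def mult.assoc)
  have gen: "\<And>X U Y D::complex. (X * U + Y) / D = X / D * U + Y / D"
    by (simp add: add_divide_distrib)
  show ?thesis
    unfolding Let_def hA hB hE vd U0_def[symmetric] main
    by (rule gen)
qed

end
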